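(* Let a language model $M$ produce $L$ responses $g_1,\dots,g_L$ to a single prompt, where response $g_i$ has final answer $s_i$, and let a verifier (process reward model) $V$ assign to each $g_i$ a scalar score $p_i$. Let $\mathcal{A}=\{\alpha_1,\dots,\alpha_m\}$ (with $m\ge 2$) be the set of distinct candidate answers. For a hypothesized true answer $\alpha_k\in\mathcal{A}$, set $c_i=1$ if $s_i=\alpha_k$ and $c_i=0$ otherwise. Assume the following model of the evidence given $\alpha_k$: (i) (Score and generation independence) $P(\mathcal{P}\mid \mathcal{G},\alpha_k,V)=\prod_{i=1}^L P(p_i\mid g_i,\alpha_k,V)$ and $P(\mathcal{G}\mid \alpha_k,M)=\prod_{i=1}^L P(g_i\mid \alpha_k,M)$, where $\mathcal{G}=\{g_1,\dots,g_L\}$ and $\mathcal{P}=\{p_1,\dots,p_L\}$, and the joint likelihood factors as $P(\mathcal{G},\mathcal{P}\mid\alpha_k,M,V)=P(\mathcal{P}\mid\mathcal{G},\alpha_k,V)\,P(\mathcal{G}\mid\alpha_k,M)$; (ii) the score likelihood depends on $g_i$ and $\alpha_k$ only through the correctness indicator, i.e. $P(p_i\mid g_i,\alpha_k,V)=P(p_i\mid c_i,V)$, with $P(p_i\mid c_i=1,V)>0$ and $P(p_i\mid c_i=0,V)>0$; (iii) $P(g_i\mid\alpha_k,M)=P(s_i\mid\alpha_k,M)$, where $P(s_i=\alpha_k\mid\alpha_k,M)=q_M$ and $P(s_i=\alpha\mid\alpha_k,M)=(1-q_M)/(m-1)$ for each $\alpha\in\mathcal{A}$ with $\alpha\neq\alpha_k$,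 for some $q_M\in(0,1)$ not depending on $k$. Define the log-likelihood $\mathrm{LL}(\alpha_k)=\sum_{i=1}^L\log P(p_i\mid g_i,\alpha_k,V)+\sum_{i=1}^L\log P(g_i\mid\alpha_k,M)$. Then maximizing $\mathrm{LL}(\alpha_k)$ over $\alpha_k\in\mathcal{A}$ is equivalent to maximizing $$\mathrm{Score}(\alpha_k)=\sum_{i:\,s_i=\alpha_k} w_i,\qquad w_i=\log\frac{P(p_i\mid c_i=1,V)}{P(p_i\mid c_i=0,V)}+\log\frac{q_M\,(m-1)}{1-q_M},$$ i.e. $\arg\max_{\alpha_k\in\mathcal{A}}\mathrm{LL}(\alpha_k)=\arg\max_{\alpha_k\in\mathcal{A}}\mathrm{Score}(\alpha_k)$.
   Context: In this setting, the goal is maximum a posteriori selection of the true answer; with a uniform prior over the candidate answers in $\mathcal{A}$, this is the same as maximizing the likelihood $P(\mathcal{G},\mathcal{P}\mid\alpha_k,M,V)$. In $w_i$, the quantity $P(p_i\mid c_i=1,V)$ (resp. $P(p_i\mid c_i=0,V)$) denotes the likelihood (density) of the verifier producing score $p_i$ for a correct (resp. incorrect) response. *)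

theory Defs
  imports Complex_Main
begin

text \<open>Responses are indexed by i < L; s i is the final answer of response i.
  Pscore i a models P(p_i | g_i, a, V), Pgen i a models P(g_i | a, M).\<close>

definition LL :: "nat \<Rightarrow> (nat \<Rightarrow> 'a \<Rightarrow> real) \<Rightarrow> (nat \<Rightarrow> 'a \<Rightarrow> real) \<Rightarrow> 'a \<Rightarrow> real" where
  "LL L Pscore Pgen a = (\<Sum>i<L. ln (Pscore i a)) + (\<Sum>i<L. ln (Pgen i a))"

definition weight :: "(nat \<Rightarrow> real) \<Rightarrow> (nat \<Rightarrow> real) \<Rightarrow> real \<Rightarrow> nat \<Rightarrow> nat \<Rightarrow> real" where
  "weight f1 f0 q m i = ln (f1 i / f0 i) + ln (q * (real m - 1) / (1 - q))"

definition Score :: "nat \<Rightarrow> (nat \<Rightarrow> 'a) \<Rightarrow> (nat \<Rightarrow> real) \<Rightarrow> (nat \<Rightarrow> real) \<Rightarrow> real \<Rightarrow> nat \<Rightarrow> 'a \<Rightarrow> real" where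
  "Score L s f1 f0 q m a = (\<Sum>i\<in>{i. i < L \<and> s i = a}. weight f1 f0 q m i)"

definition argmax_on :: "'a set \<Rightarrow> ('a \<Rightarrow> real) \<Rightarrow> 'a set" where
  "argmax_on A f = {a \<in> A. \<forall>b\<in>A. f b \<le> f a}"

end

theory Submission
  imports Defs
begin

theorem theorem3p2:
  fixes L m :: nat
    and A :: "'a set"
    and s :: "nat \<Rightarrow> 'a"
    and f1 f0 :: "nat \<Rightarrow> real"
    and q :: real
    and Pscore Pgen :: "nat \<Rightarrow> 'a \<Rightarrow> real"
  assumes finA: "finite A" and cardA: "card A = m" and m2: "m \<ge> 2"
    and sA: "\<And>i. i < L \<Longrightarrow> s i \<in> A"
    and f1pos: "\<And>i. i < L \<Longrightarrow> f1 i > 0"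
    and f0pos: "\<And>i. i < L \<Longrightarrow> f0 i > 0"
    and score_lik: "\<And>i a. i < L \<Longrightarrow> a \<in> A \<Longrightarrow>
        Pscore i a = (if s i = a then f1 i else f0 i)"
    and q01: "0 < q" "q < 1"
    and gen_lik: "\<And>i a. i < L \<Longrightarrow> a \<in> A \<Longrightarrow>
        Pgen i a = (if s i = a then q else (1 - q) / (real m - 1))"
  shows "argmax_on A (LL L Pscore Pgen) = argmax_on A (Score L s f1 f0 q m)"
proof -
  define r where "r = (1 - q) / (real m - 1)"
  have m1: "real m - 1 > 0" using m2 by simp
  have rpos: "r > 0" using q01 m1 unfolding r_def by simp
  define C where "C = (\<Sum>i<L. ln (f0 i) + ln r)"
  have key: "LL L Pscore Pgen a = Score L s f1 f0 q m a + C" if aA: "a \<in> A" for a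
  proof -
    have pt: "ln (Pscore i a) + ln (Pgen i a) =
        (if s i = a then weight f1 f0 q m i else 0) + (ln (f0 i) + ln r)" if iL: "i < L" for i
    proof (cases "s i = a")
      case True
      have "ln (q * (real m - 1) / (1 - q)) = ln q - ln r"
        using q01 m1 unfolding r_def by (simp add: ln_div ln_mult)
      moreover have "ln (f1 i / f0 i) = ln (f1 i) - ln (f0 i)"
        using f1pos[OF iL] f0pos[OF iL] by (simp add: ln_div)
      ultimately show ?thesis using True score_lik[OF iL aA] gen_lik[OF iL aA]
        unfolding weight_def by simp
    next
      case False
      then show ?thesis using score_lik[OF iL aA] gen_lik[OF iL aA] unfolding r_def by simp
    qed
    have "LL L Pscore Pgen a = (\<Sum>i<L. ln (Pscore i a) + ln (Pgen i a))"
      unfolding LL_def by (simp add: sum.distrib)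
    also have "\<dots> = (\<Sum>i<L. (if s i = a then weight f1 f0 q m i else 0)) + C"
      unfolding C_def using pt by (simp add: sum.distrib)
    also have "(\<Sum>i<L. (if s i = a then weight f1 f0 q m i else 0)) = Score L s f1 f0 q m a"
      unfolding Score_def by (simp add: sum.If_cases lessThan_def Collect_conj_eq Int_commute)
    finally show ?thesis .
  qed
  show ?thesis unfolding argmax_on_def using key by auto
qed

end
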